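(* For every $f\in C_c^\infty(S\mathbb D_H^\circ)$, $$\int_{\mathcal G_H}\int_{\mathbb R}f(\gamma_{\beta,a}(t),\dot\gamma_{\beta,a}(t))\,dt\,d\beta\,da=\int_{S\mathbb D_H^\circ}f\,d\Sigma^3.$$
   Context: $\mathbb D_H^\circ=\{|z|<1\}$ with Poincaré metric $g_H=c(z)^{-2}|dz|^2$, $c(z)=(1-|z|^2)/2$. Its unit tangent bundle $S\mathbb D_H^\circ$ is identified with $\mathbb D_H^\circ\times\mathbb R/2\pi\mathbb Z$ via $(z,\theta)\leftrightarrow(z,2\,\mathrm{Re}(c(z)e^{i\theta}\partial_z))$, and $d\Sigma^3=c(z)^{-2}\frac{d\bar z\wedge dz}{2i}\wedge d\theta$ is the Liouville form (as a measure). $\mathcal G_H=\mathbb S^1_\beta\times\mathbb R_a$ with measure $d\beta\,da$, and $\gamma_{\beta,a}(t)=e^{i\beta}\frac{(2+ia)\tanh(t/2)+ia}{ia\tanh(t/2)-2+ia}$ (unit-speed geodesics). *)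

theory Defs
  imports "HOL-Analysis.Analysis"
begin

coinductive C_inf :: "('a::euclidean_space \<Rightarrow> real) \<Rightarrow> bool" where
  "(\<And>x. (g has_derivative g' x) (at x)) \<Longrightarrow> (\<And>v. C_inf (\<lambda>x. g' x v)) \<Longrightarrow> C_inf g"

text \<open>Conformal factor c(z) = (1 - |z|^2)/2 of the Poincare metric.\<close>
definition cH :: "complex \<Rightarrow> real" where
  "cH z = (1 - (cmod z)\<^sup>2) / 2"

text \<open>Functions in C_c-infinity of the unit tangent bundle, identified with the unit disc
  times R/2piZ: smooth functions of (z, theta), 2pi-periodic in theta, whose support lies in
  K x R for a compact K inside the open unit disc (extended by zero outside).\<close>
definition Cc_inf_SD :: "(complex \<times> real \<Rightarrow> real) \<Rightarrow> bool" where
  "Cc_inf_SD f \<longleftrightarrow> C_inf f \<and> (\<forall>z \<theta>. f (z, \<theta> + 2 * pi) = f (z, \<theta>)) \<and>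
     (\<exists>K. compact K \<and> K \<subseteq> ball 0 1 \<and> (\<forall>z \<theta>. z \<notin> K \<longrightarrow> f (z, \<theta>) = 0))"

text \<open>The unit speed geodesics gamma_{beta,a}.\<close>
definition gammaH :: "real \<Rightarrow> real \<Rightarrow> real \<Rightarrow> complex" where
  "gammaH \<beta> a t = exp (\<i> * of_real \<beta>) *
     (((2 + \<i> * of_real a) * of_real (tanh (t / 2)) + \<i> * of_real a) /
      (\<i> * of_real a * of_real (tanh (t / 2)) - 2 + \<i> * of_real a))"

text \<open>Angle coordinate of the velocity: gamma'(t) = 2 Re(c(gamma(t)) e^{i theta} d_z), i.e. as a
  complex number gamma'(t) = c(gamma(t)) e^{i theta}.\<close>
definition thetaH :: "real \<Rightarrow> real \<Rightarrow> real \<Rightarrow> real" where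
  "thetaH \<beta> a t = Arg (vector_derivative (gammaH \<beta> a) (at t) / of_real (cH (gammaH \<beta> a t)))"

end

theory Submission
  imports Defs
begin


definition TT :: "real \<Rightarrow> real" where "TT t = tanh (t/2)"
definition ss :: "real \<Rightarrow> real \<Rightarrow> real" where "ss a t = a * (TT t + 1) / 2"
definition UU :: "real \<Rightarrow> real \<Rightarrow> complex" where
  "UU a t = (complex_of_real (TT t) + \<i> * complex_of_real (ss a t)) / (1 + \<i> * complex_of_real (ss a t))"
definition ph :: "real \<Rightarrow> real \<Rightarrow> real" where "ph a t = pi + 2 * arctan (ss a t)"

lemma TT_bounds: "-1 < TT t" "TT t < 1"
  using tanh_real_bounds[of "t/2"] by (auto simp: TT_def)

lemma one_plus_is_nz: "1 + \<i> * complex_of_real s \<noteq> 0"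
  by (simp add: complex_eq_iff)

lemma one_minus_is_nz: "1 - \<i> * complex_of_real s \<noteq> 0"
  by (simp add: complex_eq_iff)

lemma cis_arctan: "cis (arctan s) = (1 + \<i> * complex_of_real s) / complex_of_real (sqrt (1 + s\<^sup>2))"
proof -
  have "sqrt (1 + s\<^sup>2) > 0" by (simp add: add_pos_nonneg)
  then show ?thesis
    by (simp add: cis.ctr cos_arctan sin_arctan complex_eq_iff)
qed

lemma cis_ph: "cis (ph a t) = - (1 + \<i> * complex_of_real (ss a t)) / (1 - \<i> * complex_of_real (ss a t))"
proof -
  define s where "s = ss a t"
  have q: "sqrt (1 + s\<^sup>2) ^ 2 = 1 + s\<^sup>2" by (simp add: add_nonneg_nonneg)
  have "cis (ph a t) = cis pi * cis (arctan s) ^ 2"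
  proof -
    have c2: "cis (arctan s) ^ 2 = cis (2 * arctan s)" by (simp only: power2_eq_square cis_mult mult_2)
    have "cis (ph a t) = cis pi * cis (2 * arctan s)" by (simp only: ph_def s_def cis_mult)
    then show ?thesis by (simp add: c2)
  qed
  also have "\<dots> = - ((1 + \<i> * complex_of_real s) ^ 2) / complex_of_real (1 + s\<^sup>2)"
    by (simp add: cis_arctan power_divide q flip: of_real_power)
  also have "\<dots> = - (1 + \<i> * complex_of_real s) / (1 - \<i> * complex_of_real s)"
  proof -
    have e: "complex_of_real (1 + s\<^sup>2) = (1 + \<i> * complex_of_real s) * (1 - \<i> * complex_of_real s)"
      by (simp add: algebra_simps power2_eq_square)
    show ?thesis unfolding e using one_minus_is_nz[of s] one_plus_is_nz[of s]
      by (simp add: power2_eq_square minus_divide_left)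
  qed
  finally show ?thesis by (simp add: s_def)
qed

lemma gammaH_eq: "gammaH \<beta> a t = cis (\<beta> + ph a t) * UU a t"
proof -
  define T where "T = TT t"
  define s where "s = ss a t"
  have sT: "s = a * (T + 1) / 2" by (simp add: s_def T_def ss_def)
  have d1: "\<i> * complex_of_real a * complex_of_real T - 2 + \<i> * complex_of_real a = 2 * (\<i> * complex_of_real s - 1)"
    by (simp add: sT field_simps)
  have n1: "(2 + \<i> * complex_of_real a) * complex_of_real T + \<i> * complex_of_real a = 2 * (complex_of_real T + \<i> * complex_of_real s)"
    by (simp add: sT field_simps)
  have "gammaH \<beta> a t = cis \<beta> * ((complex_of_real T + \<i> * complex_of_real s) / (\<i> * complex_of_real s - 1))"
    unfolding gammaH_def d1[unfolded T_def TT_def] n1[unfolded T_def TT_def]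
    using one_minus_is_nz[of s] by (simp add: T_def TT_def cis_conv_exp mult.commute field_simps)
  also have "\<dots> = cis (\<beta> + ph a t) * UU a t"
  proof -
    have nz: "\<i> * complex_of_real s - 1 \<noteq> 0" using one_minus_is_nz[of s]
      by (metis minus_diff_eq neg_equal_0_iff_equal)
    have "cis (\<beta> + ph a t) * UU a t = cis \<beta> * (- (1 + \<i> * complex_of_real s) / (1 - \<i> * complex_of_real s) *
       ((complex_of_real T + \<i> * complex_of_real s) / (1 + \<i> * complex_of_real s)))"
      unfolding cis_mult[symmetric] cis_ph UU_def s_def[symmetric] T_def[symmetric] by simp
    also have "\<dots> = cis \<beta> * ((complex_of_real T + \<i> * complex_of_real s) / (\<i> * complex_of_real s - 1))"
    proof -
      have nz2: "1 + complex_of_real s * complex_of_real s \<noteq> 0"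
        by (metis add_nonneg_nonneg of_real_1 of_real_add of_real_eq_0_iff of_real_mult zero_le_square zero_less_one not_less_iff_gr_or_eq add_pos_nonneg)
      show ?thesis
      using one_minus_is_nz[of s] one_plus_is_nz[of s] nz nz2
      by (simp add: field_simps)
    qed
    finally show ?thesis by simp
  qed
  finally show ?thesis .
qed


lemma cmod_UU_sq: "(cmod (UU a t))\<^sup>2 = ((TT t)\<^sup>2 + (ss a t)\<^sup>2) / (1 + (ss a t)\<^sup>2)"
proof -
  have "cmod (UU a t) = cmod (complex_of_real (TT t) + \<i> * complex_of_real (ss a t)) / cmod (1 + \<i> * complex_of_real (ss a t))"
    by (simp add: UU_def norm_divide)
  moreover have "(cmod (complex_of_real (TT t) + \<i> * complex_of_real (ss a t)))\<^sup>2 = (TT t)\<^sup>2 + (ss a t)\<^sup>2"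
    by (simp add: cmod_power2)
  moreover have "(cmod (1 + \<i> * complex_of_real (ss a t)))\<^sup>2 = 1 + (ss a t)\<^sup>2"
    by (simp add: cmod_power2)
  ultimately show ?thesis by (simp add: power_divide)
qed

lemma cH_UU: "cH (UU a t) = (1 - (TT t)\<^sup>2) / (2 * (1 + (ss a t)\<^sup>2))"
proof -
  have p: "1 + (ss a t)\<^sup>2 > 0" by (simp add: add_pos_nonneg)
  show ?thesis unfolding cH_def cmod_UU_sq using p by (simp add: field_simps)
qed

lemma cH_pos_UU: "cH (UU a t) > 0"
proof -
  have "(TT t)\<^sup>2 < 1" using TT_bounds[of t] by (simp add: abs_square_less_1)
  then show ?thesis unfolding cH_UU by (simp add: add_pos_nonneg)
qed

lemma cH_cis_mult: "cH (cis x * z) = cH z"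
  by (simp add: cH_def norm_mult)

lemma gammaH_vd: "(gammaH \<beta> a has_vector_derivative
   (exp (\<i> * complex_of_real \<beta>) * (- 4 / (\<i> * complex_of_real a * complex_of_real (TT t) - 2 + \<i> * complex_of_real a)^2)
     * complex_of_real ((1 - (TT t)\<^sup>2) / 2))) (at t)"
proof -
  define M where "M w = exp (\<i> * complex_of_real \<beta>) * (((2 + \<i> * complex_of_real a) * w + \<i> * complex_of_real a) /
      (\<i> * complex_of_real a * w - 2 + \<i> * complex_of_real a))" for w
  have g: "gammaH \<beta> a = M \<circ> (\<lambda>t. complex_of_real (TT t))"
    by (auto simp: gammaH_def M_def TT_def fun_eq_iff)
  have d1: "((\<lambda>t. complex_of_real (TT t)) has_vector_derivative complex_of_real ((1 - (TT t)\<^sup>2) / 2)) (at t)"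
    unfolding TT_def
    by (auto intro!: derivative_eq_intros)
  have nz: "\<i> * complex_of_real a * complex_of_real (TT t) - 2 + \<i> * complex_of_real a \<noteq> 0"
    by (simp add: complex_eq_iff)
  have d2: "(M has_field_derivative (exp (\<i> * complex_of_real \<beta>) * (- 4 / (\<i> * complex_of_real a * complex_of_real (TT t) - 2 + \<i> * complex_of_real a)^2))) (at (complex_of_real (TT t)))"
    unfolding M_def
    using nz by (auto intro!: derivative_eq_intros simp: field_simps power2_eq_square)
  show ?thesis unfolding g using field_vector_diff_chain_at[OF d1 d2] by (simp add: mult.commute)
qed


lemma thetaH_eq: "\<exists>k::int. thetaH \<beta> a t = \<beta> + ph a t - of_int k * (2 * pi)"
proof -
  define T where "T = TT t"
  define s where "s = ss a t"
  define D where "D = \<i> * complex_of_real a * complex_of_real T - 2 + \<i> * complex_of_real a"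
  have sT: "s = a * (T + 1) / 2" by (simp add: s_def T_def ss_def)
  have D: "D = 2 * (\<i> * complex_of_real s - 1)" by (simp add: D_def sT field_simps)
  have vd: "vector_derivative (gammaH \<beta> a) (at t) = exp (\<i> * complex_of_real \<beta>) * (- 4 / D^2) * complex_of_real ((1 - T\<^sup>2) / 2)"
    using gammaH_vd[of \<beta> a t] vector_derivative_at unfolding D_def T_def by blast
  have c: "cH (gammaH \<beta> a t) = (1 - T\<^sup>2) / (2 * (1 + s\<^sup>2))"
    by (simp add: gammaH_eq cH_cis_mult cH_UU T_def s_def)
  have T1: "1 - T\<^sup>2 > 0" using TT_bounds[of t] by (simp add: T_def abs_square_less_1)
  have p: "1 + s\<^sup>2 > 0" by (simp add: add_pos_nonneg)
  have nz: "\<i> * complex_of_real s - 1 \<noteq> 0" by (simp add: complex_eq_iff)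
  have e: "complex_of_real (1 + s\<^sup>2) = (1 + \<i> * complex_of_real s) * (1 - \<i> * complex_of_real s)"
    by (simp add: algebra_simps power2_eq_square)
  have "vector_derivative (gammaH \<beta> a) (at t) / complex_of_real (cH (gammaH \<beta> a t))
      = exp (\<i> * complex_of_real \<beta>) * (- complex_of_real (1 + s\<^sup>2) / (\<i> * complex_of_real s - 1)^2)"
  proof -
    have r: "((1 - T\<^sup>2) / 2) / ((1 - T\<^sup>2) / (2 * (1 + s\<^sup>2))) = 1 + s\<^sup>2"
      using T1 p by (simp add: field_simps)
    have "vector_derivative (gammaH \<beta> a) (at t) / complex_of_real (cH (gammaH \<beta> a t))
       = exp (\<i> * complex_of_real \<beta>) * (- 4 / D^2) * complex_of_real (((1 - T\<^sup>2) / 2) / ((1 - T\<^sup>2) / (2 * (1 + s\<^sup>2))))"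
      unfolding vd c by (simp only: of_real_divide[of "(1 - T\<^sup>2) / 2"] times_divide_eq_right)
    also have "\<dots> = exp (\<i> * complex_of_real \<beta>) * (- 4 / D^2) * complex_of_real (1 + s\<^sup>2)"
      unfolding r ..
    also have "\<dots> = exp (\<i> * complex_of_real \<beta>) * (- complex_of_real (1 + s\<^sup>2) / (\<i> * complex_of_real s - 1)^2)"
    proof -
      have Dsq: "D^2 = 4 * (\<i> * complex_of_real s - 1)^2" unfolding D
        by (metis (no_types, lifting) power_mult_distrib numeral_Bit0_eq_double power2_eq_square mult_2 one_add_one numeral_times_numeral semiring_norm(12) semiring_norm(13) semiring_norm(2))
      have g1: "\<And>Y::complex. -4 / (4 * Y) = -1 / Y" by simp
      have g2: "\<And>e Y R::complex. e * (-1 / Y) * R = e * (-R / Y)" by (simp add: field_simps)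
      show ?thesis unfolding Dsq g1 g2 ..
    qed
    finally show ?thesis .
  qed
  also have "\<dots> = cis (\<beta> + ph a t)"
  proof -
    have g: "\<And>e p m::complex. m \<noteq> 0 \<Longrightarrow> e * (-(p*m)/((-m)^2)) = e * (-p/m)"
      by (simp add: power2_eq_square)
    have X: "\<i> * complex_of_real s - 1 = - (1 - \<i> * complex_of_real s)" by simp
    show ?thesis
      unfolding e cis_mult[symmetric] cis_ph s_def[symmetric] X g[OF one_minus_is_nz]
      by (simp add: cis_conv_exp)
  qed
  finally have q: "vector_derivative (gammaH \<beta> a) (at t) / complex_of_real (cH (gammaH \<beta> a t)) = rcis 1 (\<beta> + ph a t)"
    by (simp add: rcis_def)
  have "thetaH \<beta> a t = normalize_angle (\<beta> + ph a t)"
    unfolding thetaH_def q by (rule Arg_rcis') simp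
  then show ?thesis unfolding normalize_angle_def by blast
qed

lemma periodic_int:
  assumes "\<And>z \<theta>. f (z, \<theta> + 2 * pi) = f (z, \<theta>)"
  shows "f (z, \<theta> + of_int k * (2 * pi)) = f (z, \<theta>)"
proof -
  have n: "f (z, x + real n * (2 * pi)) = f (z, x)" for x n
  proof (induction n)
    case (Suc n)
    have "f (z, x + real (Suc n) * (2 * pi)) = f (z, (x + real n * (2 * pi)) + 2 * pi)"
      by (simp add: algebra_simps)
    also have "\<dots> = f (z, x + real n * (2 * pi))" by (rule assms)
    finally show ?case using Suc by simp
  qed simp
  show ?thesis
  proof (cases "k \<ge> 0")
    case True
    then show ?thesis using n[of \<theta> "nat k"] by simp
  next
    case False
    then have "f (z, (\<theta> + of_int k * (2 * pi)) + real (nat (-k)) * (2 * pi)) = f (z, \<theta> + of_int k * (2 * pi))"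
      using n by blast
    then show ?thesis using False by (simp add: algebra_simps)
  qed
qed

lemma integrand_eq:
  assumes "\<And>z \<theta>. f (z, \<theta> + 2 * pi) = f (z, \<theta>)"
  shows "f (gammaH \<beta> a t, thetaH \<beta> a t) = f (cis (\<beta> + ph a t) * UU a t, \<beta> + ph a t)"
proof -
  obtain k :: int where k: "thetaH \<beta> a t = \<beta> + ph a t - of_int k * (2 * pi)" using thetaH_eq by blast
  have "f (gammaH \<beta> a t, thetaH \<beta> a t) = f (gammaH \<beta> a t, thetaH \<beta> a t + of_int k * (2 * pi))"
    using periodic_int[OF assms] by metis
  then show ?thesis using k by (simp add: gammaH_eq)
qed


lemma C_inf_continuous: "C_inf g \<Longrightarrow> continuous_on UNIV g"
  by (erule C_inf.cases) (metis has_derivative_continuous continuous_at_imp_continuous_on)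

lemma compact_in_ball: 
  assumes "compact K" "K \<subseteq> ball (0::complex) 1"
  obtains r where "0 \<le> r" "r < 1" "K \<subseteq> cball 0 r"
proof (cases "K = {}")
  case True then show ?thesis using that[of 0] by auto
next
  case False
  obtain z where z: "z \<in> K" "\<And>y. y \<in> K \<Longrightarrow> norm y \<le> norm z"
    using continuous_attains_sup[OF assms(1) False, of norm] by (auto intro: continuous_intros)
  show ?thesis using that[of "norm z"] z assms(2) by (auto simp: subset_iff)
qed

lemma Cc_props:
  assumes "Cc_inf_SD f"
  shows "continuous_on UNIV f" "\<And>z \<theta>. f (z, \<theta> + 2 * pi) = f (z, \<theta>)"
    and "\<exists>r. 0 \<le> r \<and> r < 1 \<and> (\<forall>z \<theta>. cmod z > r \<longrightarrow> f (z, \<theta>) = 0)"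
    and "\<exists>M. \<forall>p. \<bar>f p\<bar> \<le> M"
proof -
  from assms obtain K where K: "C_inf f" "\<And>z \<theta>. f (z, \<theta> + 2 * pi) = f (z, \<theta>)" "compact K" "K \<subseteq> ball 0 1"
    "\<And>z \<theta>. z \<notin> K \<Longrightarrow> f (z, \<theta>) = 0"
    unfolding Cc_inf_SD_def by blast
  show c: "continuous_on UNIV f" by (rule C_inf_continuous[OF K(1)])
  show "\<And>z \<theta>. f (z, \<theta> + 2 * pi) = f (z, \<theta>)" by (rule K(2))
  obtain r where r: "0 \<le> r" "r < 1" "K \<subseteq> cball 0 r" using compact_in_ball[OF K(3,4)] by blast
  show "\<exists>r. 0 \<le> r \<and> r < 1 \<and> (\<forall>z \<theta>. cmod z > r \<longrightarrow> f (z, \<theta>) = 0)"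
  proof (intro exI[of _ r] conjI allI impI r(1) r(2))
    fix z \<theta> assume "cmod z > r"
    then have "z \<notin> K" using r(3) by auto
    then show "f (z, \<theta>) = 0" by (rule K(5))
  qed
  have "compact (f ` (K \<times> {0..2*pi}))"
    by (intro compact_continuous_image continuous_on_subset[OF c] compact_Times K(3)) auto
  then obtain M where M: "\<And>p. p \<in> K \<times> {0..2*pi} \<Longrightarrow> \<bar>f p\<bar> \<le> M"
    by (meson compact_imp_bounded bounded_real image_eqI)
  have "\<bar>f (z, \<theta>)\<bar> \<le> max M 0" for z \<theta>
  proof (cases "z \<in> K")
    case True
    define k where "k = \<lfloor>\<theta> / (2*pi)\<rfloor>"
    have "f (z, \<theta>) = f (z, (\<theta> - of_int k * (2*pi)) + of_int k * (2*pi))" by simp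
    also have "\<dots> = f (z, \<theta> - of_int k * (2*pi))" by (rule periodic_int[OF K(2)])
    finally have e: "f (z, \<theta>) = f (z, \<theta> - of_int k * (2*pi))" .
    have "of_int k * (2*pi) \<le> \<theta>" "\<theta> < (of_int k + 1) * (2*pi)"
    proof -
      have fc: "of_int k \<le> \<theta> / (2*pi)" "\<theta> / (2*pi) < of_int k + 1"
        using floor_correct[of "\<theta> / (2*pi)"] unfolding k_def by auto
      have pp: "2 * pi > 0" by simp
      show "of_int k * (2*pi) \<le> \<theta>" using fc(1) pp by (simp add: pos_le_divide_eq)
      show "\<theta> < (of_int k + 1) * (2*pi)" using fc(2) pp by (simp add: pos_divide_less_eq)
    qed
    then have "\<theta> - of_int k * (2*pi) \<in> {0..2*pi}" by (auto simp: algebra_simps)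
    then show ?thesis using M[of "(z, \<theta> - of_int k * (2*pi))"] True e by auto
  qed (use K(5) in auto)
  then show "\<exists>M. \<forall>p. \<bar>f p\<bar> \<le> M" by auto
qed

lemma integrable_bounded_support:
  fixes g :: "'a::euclidean_space \<Rightarrow> real"
  assumes "g \<in> borel_measurable borel" "\<And>x. \<bar>g x\<bar> \<le> M" "bounded B" "\<And>x. x \<notin> B \<Longrightarrow> g x = 0"
  shows "integrable lborel g"
proof -
  obtain R where "\<forall>x\<in>B. norm x \<le> R" using assms(3) unfolding bounded_iff by blast
  then have R: "B \<subseteq> cball 0 R" by (auto simp: subset_iff)
  have i: "integrable lborel (\<lambda>x. indicator (cball 0 R) x *\<^sub>R M)"
    by (rule borel_integrable_compact) (simp_all add: continuous_on_const)
  show ?thesis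
  proof (rule Bochner_Integration.integrable_bound[OF i])
    show "g \<in> borel_measurable lborel" using assms(1) by simp
    show "AE x in lborel. norm (g x) \<le> norm (indicator (cball 0 R) x *\<^sub>R M)"
    proof (rule AE_I2)
      fix x
      show "norm (g x) \<le> norm (indicator (cball 0 R) x *\<^sub>R M)"
      proof (cases "x \<in> cball 0 R")
        case True
        then show ?thesis using assms(2)[of x] by simp
      next
        case False
        then have "x \<notin> B" using R by blast
        then show ?thesis using assms(4)[of x] by simp
      qed
    qed
  qed
qed


lemma tanh_artanh_real: 
  assumes "\<bar>x::real\<bar> < 1" shows "tanh (artanh x) = x"
proof -
  have p: "1 + x > 0" "1 - x > 0" using assms by auto
  have "exp (- 2 * artanh x) = (1 - x) / (1 + x)"
  proof -
    have "- 2 * artanh x = ln (1 - x) - ln (1 + x)" using p by (simp add: artanh_def ln_div)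
    then show ?thesis using p by (simp add: exp_diff)
  qed
  moreover have "tanh (artanh x) = (1 - exp (- 2 * artanh x)) / (1 + exp (- 2 * artanh x))"
    by (rule tanh_real_altdef)
  ultimately have "tanh (artanh x) = (1 - (1 - x) / (1 + x)) / (1 + (1 - x) / (1 + x))" by simp
  also have "\<dots> = x" using p by (simp add: field_simps)
  finally show ?thesis .
qed

lemma UU_bound:
  assumes "0 \<le> r" "r < 1" "cmod (UU a t) \<le> r"
  shows "\<bar>t\<bar> \<le> 2 * artanh r" "\<bar>a\<bar> \<le> 2 / ((1 - r\<^sup>2) * (1 - r))"
proof -
  define T where "T = TT t"
  define s where "s = ss a t"
  have p: "1 + s\<^sup>2 > 0" by (simp add: add_pos_nonneg)
  have r2: "r\<^sup>2 < 1" using assms by (simp add: abs_square_less_1)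
  have "(cmod (UU a t))\<^sup>2 \<le> r\<^sup>2" using assms by (simp add: power_mono)
  then have "(T\<^sup>2 + s\<^sup>2) / (1 + s\<^sup>2) \<le> r\<^sup>2" unfolding cmod_UU_sq T_def s_def .
  then have i: "T\<^sup>2 + s\<^sup>2 \<le> r\<^sup>2 * (1 + s\<^sup>2)" using p by (simp add: divide_le_eq)
  have "(1 - r\<^sup>2) * (1 + s\<^sup>2) \<le> 1 - T\<^sup>2" using i by (simp add: algebra_simps)
  moreover have "(1 - r\<^sup>2) * 1 \<le> (1 - r\<^sup>2) * (1 + s\<^sup>2)" using r2 by (intro mult_left_mono) auto
  ultimately have T2: "T\<^sup>2 \<le> r\<^sup>2" by simp
  then have Tr: "\<bar>T\<bar> \<le> r" using assms(1) power2_le_iff_abs_le by blast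
  have "tanh (\<bar>t\<bar>/2) \<le> tanh (artanh r)"
    using Tr assms by (simp add: tanh_artanh_real T_def TT_def flip: tanh_real_abs)
  then show "\<bar>t\<bar> \<le> 2 * artanh r" by simp
  have "(1 - r\<^sup>2) * (1 + s\<^sup>2) \<le> 1" using \<open>(1 - r\<^sup>2) * (1 + s\<^sup>2) \<le> 1 - T\<^sup>2\<close> using zero_le_power2[of T] by linarith
  then have s2: "1 + s\<^sup>2 \<le> 1 / (1 - r\<^sup>2)" using r2 by (simp add: le_divide_eq mult.commute)
  have sb: "\<bar>s\<bar> \<le> 1 / (1 - r\<^sup>2)"
  proof (cases "\<bar>s\<bar> \<le> 1")
    case True
    have "1 \<le> 1 / (1 - r\<^sup>2)" using r2 assms(1) by (simp add: le_divide_eq)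
    then show ?thesis using True by linarith
  next
    case False
    have "\<bar>s\<bar> * 1 \<le> \<bar>s\<bar> * \<bar>s\<bar>" using False by (intro mult_left_mono) auto
    then have "\<bar>s\<bar> \<le> s\<^sup>2" by (simp add: power2_eq_square)
    then show ?thesis using s2 by linarith
  qed
  have T1: "T + 1 \<ge> 1 - r" using Tr by linarith
  have a: "a = 2 * s / (T + 1)" using T1 assms(2) by (simp add: s_def ss_def T_def field_simps)
  have "\<bar>a\<bar> = 2 * \<bar>s\<bar> / (T + 1)" using a T1 assms(2) by (simp add: abs_divide abs_mult)
  also have "\<dots> \<le> 2 * (1 / (1 - r\<^sup>2)) / (1 - r)"
    by (rule frac_le) (use sb T1 r2 assms in auto)
  finally show "\<bar>a\<bar> \<le> 2 / ((1 - r\<^sup>2) * (1 - r))" by simp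
qed


lemma vec_nth_hd[derivative_intros]: "((\<lambda>x. x $ i) has_derivative (\<lambda>h. h $ i)) F"
  by (rule bounded_linear_imp_has_derivative) (rule bounded_linear_vec_nth)

lemma TT_hd: "((\<lambda>v::real^3. TT (v$2)) has_derivative (\<lambda>h. (1 - (TT (v$2))\<^sup>2) / 2 * h$2)) (at v within S)"
proof -
  have c: "cosh (v$2/2) \<noteq> 0" by (metis cosh_real_pos less_irrefl)
  have "((\<lambda>v::real^3. tanh (v$2 / 2)) has_derivative (\<lambda>h. h$2 / 2 * (1 - (tanh (v$2/2))\<^sup>2))) (at v within S)"
    by (rule DERIV_compose_FDERIV[where f=tanh]) (auto intro!: derivative_eq_intros c)
  then show ?thesis unfolding TT_def by (rule has_derivative_eq_rhs) (auto simp: fun_eq_iff)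
qed

lemma ss_hd: "((\<lambda>v::real^3. ss (v$1) (v$2)) has_derivative
    (\<lambda>h. (TT (v$2) + 1) / 2 * h$1 + v$1 / 2 * ((1 - (TT (v$2))\<^sup>2) / 2 * h$2))) (at v within S)"
proof -
  have "((\<lambda>v::real^3. v$1 * (TT (v$2) + 1) / 2) has_derivative
    (\<lambda>h. (h$1 * (TT (v$2) + 1) + v$1 * ((1 - (TT (v$2))\<^sup>2) / 2 * h$2 + 0)) / 2)) (at v within S)"
    by (auto intro!: derivative_eq_intros TT_hd)
  then show ?thesis unfolding ss_def by (rule has_derivative_eq_rhs) (auto simp: fun_eq_iff algebra_simps)
qed


definition XX :: "real \<Rightarrow> real \<Rightarrow> real" where "XX a t = (TT t + (ss a t)\<^sup>2) / (1 + (ss a t)\<^sup>2)"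
definition YY :: "real \<Rightarrow> real \<Rightarrow> real" where "YY a t = ss a t * (1 - TT t) / (1 + (ss a t)\<^sup>2)"

lemma UU_eq: "UU a t = Complex (XX a t) (YY a t)"
proof -
  define T where "T = TT t"
  define s where "s = ss a t"
  have p: "1 + s\<^sup>2 > 0" by (simp add: add_pos_nonneg)
  have e: "complex_of_real (1 + s\<^sup>2) = (1 + \<i> * complex_of_real s) * (1 - \<i> * complex_of_real s)"
    by (simp add: algebra_simps power2_eq_square)
  have "UU a t = (complex_of_real T + \<i> * complex_of_real s) * (1 - \<i> * complex_of_real s) / complex_of_real (1 + s\<^sup>2)"
    unfolding e UU_def T_def[symmetric] s_def[symmetric] using one_minus_is_nz[of s] by simp
  also have "\<dots> = Complex ((T + s\<^sup>2) / (1 + s\<^sup>2)) (s * (1 - T) / (1 + s\<^sup>2))"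
    using p by (simp add: complex_eq_iff Re_divide_of_real Im_divide_of_real power2_eq_square algebra_simps)
  finally show ?thesis by (simp add: XX_def YY_def T_def s_def)
qed

lemma alg_X:
  fixes s T dS dT :: real
  assumes "1 + s\<^sup>2 > 0"
  shows "((dT + 2 * s * dS) * (1 + s\<^sup>2) - (T + s\<^sup>2) * (0 + 2 * s * dS)) / ((1 + s\<^sup>2) * (1 + s\<^sup>2))
     = 2 * s * (1 - T) / (1 + s\<^sup>2)\<^sup>2 * dS + 1 / (1 + s\<^sup>2) * dT"
proof -
  define D where "D = 1 + s\<^sup>2"
  have D0: "D \<noteq> 0" using assms D_def by simp
  have "((dT + 2 * s * dS) * D - (T + s\<^sup>2) * (0 + 2 * s * dS)) / (D * D) = 2 * s * (1 - T) / D\<^sup>2 * dS + 1 / D * dT"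
    using D0 by (simp add: field_simps power2_eq_square) (simp add: D_def algebra_simps power2_eq_square)
  then show ?thesis by (simp add: D_def)
qed
lemma alg_Y:
  fixes s T dS dT :: real
  assumes "1 + s\<^sup>2 > 0"
  shows "((s * (0 - dT) + dS * (1 - T)) * (1 + s\<^sup>2) - (s * (1 - T)) * (0 + 2 * s * dS)) / ((1 + s\<^sup>2) * (1 + s\<^sup>2))
      = (1 - T) * (1 - s\<^sup>2) / (1 + s\<^sup>2)\<^sup>2 * dS + (- s / (1 + s\<^sup>2)) * dT"
proof -
  define D where "D = 1 + s\<^sup>2"
  have D0: "D \<noteq> 0" using assms D_def by simp
  have "((s * (0 - dT) + dS * (1 - T)) * D - (s * (1 - T)) * (0 + 2 * s * dS)) / (D * D) = (1 - T) * (1 - s\<^sup>2) / D\<^sup>2 * dS + (- s / D) * dT"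
    using D0 by (simp add: field_simps power2_eq_square) (simp add: D_def algebra_simps power2_eq_square)
  then show ?thesis by (simp add: D_def)
qed

definition "Tp t = (1 - (TT t)\<^sup>2) / 2"
definition "sa t = (TT t + 1) / 2"
definition "st a t = a / 2 * Tp t"
definition "Xs a t = 2 * ss a t * (1 - TT t) / (1 + (ss a t)\<^sup>2)\<^sup>2"
definition "XT a t = 1 / (1 + (ss a t)\<^sup>2)"
definition "Ys a t = (1 - TT t) * (1 - (ss a t)\<^sup>2) / (1 + (ss a t)\<^sup>2)\<^sup>2"
definition "YT a t = - ss a t / (1 + (ss a t)\<^sup>2)"

lemma TT_hd': "((\<lambda>v::real^3. TT (v$2)) has_derivative (\<lambda>h. Tp (v$2) * h$2)) (at v within S)"
  using TT_hd unfolding Tp_def .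

lemma ss_hd': "((\<lambda>v::real^3. ss (v$1) (v$2)) has_derivative (\<lambda>h. sa (v$2) * h$1 + st (v$1) (v$2) * h$2)) (at v within S)"
  using ss_hd unfolding sa_def st_def Tp_def by (simp add: mult.assoc)

lemma XX_hd: "((\<lambda>v::real^3. XX (v$1) (v$2)) has_derivative
   (\<lambda>h. Xs (v$1) (v$2) * (sa (v$2) * h$1 + st (v$1) (v$2) * h$2) + XT (v$1) (v$2) * (Tp (v$2) * h$2))) (at v within S)"
proof -
  let ?s = "ss (v$1) (v$2)" and ?T = "TT (v$2)"
  let ?dS = "\<lambda>h. sa (v$2) * h$1 + st (v$1) (v$2) * h$2" and ?dT = "\<lambda>h. Tp (v$2) * h$2"
  have p: "1 + ?s\<^sup>2 > 0" by (simp add: add_pos_nonneg)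
  have dS2: "((\<lambda>v::real^3. (ss (v$1) (v$2))\<^sup>2) has_derivative (\<lambda>h. 2 * ?s * ?dS h)) (at v within S)"
    by (rule has_derivative_eq_rhs[OF has_derivative_power[OF ss_hd', where n=2]]) (simp add: fun_eq_iff algebra_simps)
  have N: "((\<lambda>v::real^3. TT (v$2) + (ss (v$1) (v$2))\<^sup>2) has_derivative (\<lambda>h. ?dT h + 2 * ?s * ?dS h)) (at v within S)"
    by (rule has_derivative_add[OF TT_hd' dS2])
  have D: "((\<lambda>v::real^3. 1 + (ss (v$1) (v$2))\<^sup>2) has_derivative (\<lambda>h. 0 + 2 * ?s * ?dS h)) (at v within S)"
    by (rule has_derivative_add[OF has_derivative_const dS2])
  have Q: "((\<lambda>v::real^3. (TT (v$2) + (ss (v$1) (v$2))\<^sup>2) / (1 + (ss (v$1) (v$2))\<^sup>2)) has_derivative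
     (\<lambda>h. ((?dT h + 2 * ?s * ?dS h) * (1 + ?s\<^sup>2) - (?T + ?s\<^sup>2) * (0 + 2 * ?s * ?dS h)) / ((1 + ?s\<^sup>2) * (1 + ?s\<^sup>2)))) (at v within S)"
    by (rule has_derivative_divide'[OF N D]) (use p in simp)
  show ?thesis unfolding XX_def
  proof (rule has_derivative_eq_rhs[OF Q], rule ext)
    fix h :: "real^3"
    show "((?dT h + 2 * ?s * ?dS h) * (1 + ?s\<^sup>2) - (?T + ?s\<^sup>2) * (0 + 2 * ?s * ?dS h)) / ((1 + ?s\<^sup>2) * (1 + ?s\<^sup>2))
      = Xs (v$1) (v$2) * ?dS h + XT (v$1) (v$2) * ?dT h"
      unfolding Xs_def XT_def by (rule alg_X[OF p])
  qed
qed

lemma YY_hd: "((\<lambda>v::real^3. YY (v$1) (v$2)) has_derivative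
   (\<lambda>h. Ys (v$1) (v$2) * (sa (v$2) * h$1 + st (v$1) (v$2) * h$2) + YT (v$1) (v$2) * (Tp (v$2) * h$2))) (at v within S)"
proof -
  let ?s = "ss (v$1) (v$2)" and ?T = "TT (v$2)"
  let ?dS = "\<lambda>h. sa (v$2) * h$1 + st (v$1) (v$2) * h$2" and ?dT = "\<lambda>h. Tp (v$2) * h$2"
  have p: "1 + ?s\<^sup>2 > 0" by (simp add: add_pos_nonneg)
  have dS2: "((\<lambda>v::real^3. (ss (v$1) (v$2))\<^sup>2) has_derivative (\<lambda>h. 2 * ?s * ?dS h)) (at v within S)"
    by (rule has_derivative_eq_rhs[OF has_derivative_power[OF ss_hd', where n=2]]) (simp add: fun_eq_iff algebra_simps)
  have M: "((\<lambda>v::real^3. 1 - TT (v$2)) has_derivative (\<lambda>h. 0 - ?dT h)) (at v within S)"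
    by (rule has_derivative_diff[OF has_derivative_const TT_hd'])
  have N: "((\<lambda>v::real^3. ss (v$1) (v$2) * (1 - TT (v$2))) has_derivative (\<lambda>h. ?s * (0 - ?dT h) + ?dS h * (1 - ?T))) (at v within S)"
    by (rule has_derivative_mult[OF ss_hd' M])
  have D: "((\<lambda>v::real^3. 1 + (ss (v$1) (v$2))\<^sup>2) has_derivative (\<lambda>h. 0 + 2 * ?s * ?dS h)) (at v within S)"
    by (rule has_derivative_add[OF has_derivative_const dS2])
  have Q: "((\<lambda>v::real^3. ss (v$1) (v$2) * (1 - TT (v$2)) / (1 + (ss (v$1) (v$2))\<^sup>2)) has_derivative
     (\<lambda>h. ((?s * (0 - ?dT h) + ?dS h * (1 - ?T)) * (1 + ?s\<^sup>2) - (?s * (1 - ?T)) * (0 + 2 * ?s * ?dS h)) / ((1 + ?s\<^sup>2) * (1 + ?s\<^sup>2)))) (at v within S)"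
    by (rule has_derivative_divide'[OF N D]) (use p in simp)
  show ?thesis unfolding YY_def
  proof (rule has_derivative_eq_rhs[OF Q], rule ext)
    fix h :: "real^3"
    show "((?s * (0 - ?dT h) + ?dS h * (1 - ?T)) * (1 + ?s\<^sup>2) - (?s * (1 - ?T)) * (0 + 2 * ?s * ?dS h)) / ((1 + ?s\<^sup>2) * (1 + ?s\<^sup>2))
      = Ys (v$1) (v$2) * ?dS h + YT (v$1) (v$2) * ?dT h"
      unfolding Ys_def YT_def by (rule alg_Y[OF p])
  qed
qed


lemma vec3_hd:
  fixes f f' :: "'a::real_normed_vector \<Rightarrow> real^3"
  assumes "\<And>i. ((\<lambda>x. f x $ i) has_derivative (\<lambda>h. f' h $ i)) (at a within S)"
  shows "(f has_derivative f') (at a within S)"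
proof (rule iffD2[OF has_derivative_componentwise_within], rule ballI)
  fix b :: "real^3" assume "b \<in> Basis"
  then obtain i where b: "b = axis i 1" unfolding Basis_vec_def by auto
  have e: "\<And>y::real^3. y \<bullet> axis i 1 = y $ i" by (simp add: cart_eq_inner_axis)
  show "((\<lambda>x. f x \<bullet> b) has_derivative (\<lambda>x. f' x \<bullet> b)) (at a within S)"
    unfolding b e by (rule assms)
qed

definition Psi :: "real^3 \<Rightarrow> real^3" where
  "Psi v = vector [cos (v$3) * XX (v$1) (v$2) - sin (v$3) * YY (v$1) (v$2),
                   sin (v$3) * XX (v$1) (v$2) + cos (v$3) * YY (v$1) (v$2), v$3]"

definition "Xa a t = Xs a t * sa t"
definition "Xt a t = Xs a t * st a t + XT a t * Tp t"
definition "Ya a t = Ys a t * sa t"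
definition "Yt a t = Ys a t * st a t + YT a t * Tp t"

definition Jac :: "real^3 \<Rightarrow> real^3^3" where
  "Jac v = (let a = v$1; t = v$2; c = cos (v$3); s = sin (v$3) in
     vector [vector [c * Xa a t - s * Ya a t, c * Xt a t - s * Yt a t, - s * XX a t - c * YY a t],
             vector [s * Xa a t + c * Ya a t, s * Xt a t + c * Yt a t, c * XX a t - s * YY a t],
             vector [0, 0, 1]])"

lemma XX_hd2: "((\<lambda>v::real^3. XX (v$1) (v$2)) has_derivative (\<lambda>h. Xa (v$1) (v$2) * h$1 + Xt (v$1) (v$2) * h$2)) (at v within S)"
  by (rule has_derivative_eq_rhs[OF XX_hd]) (simp add: fun_eq_iff Xa_def Xt_def algebra_simps)

lemma YY_hd2: "((\<lambda>v::real^3. YY (v$1) (v$2)) has_derivative (\<lambda>h. Ya (v$1) (v$2) * h$1 + Yt (v$1) (v$2) * h$2)) (at v within S)"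
  by (rule has_derivative_eq_rhs[OF YY_hd]) (simp add: fun_eq_iff Ya_def Yt_def algebra_simps)

lemma Jac_mult: "Jac v *v h = vector [
   (cos (v$3) * Xa (v$1) (v$2) - sin (v$3) * Ya (v$1) (v$2)) * h$1 + (cos (v$3) * Xt (v$1) (v$2) - sin (v$3) * Yt (v$1) (v$2)) * h$2
     + (- sin (v$3) * XX (v$1) (v$2) - cos (v$3) * YY (v$1) (v$2)) * h$3,
   (sin (v$3) * Xa (v$1) (v$2) + cos (v$3) * Ya (v$1) (v$2)) * h$1 + (sin (v$3) * Xt (v$1) (v$2) + cos (v$3) * Yt (v$1) (v$2)) * h$2
     + (cos (v$3) * XX (v$1) (v$2) - sin (v$3) * YY (v$1) (v$2)) * h$3,
   h$3]"
  unfolding vec_eq_iff forall_3 by (simp add: Jac_def Let_def matrix_vector_mult_def sum_3)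

lemma Psi_hd: "(Psi has_derivative (\<lambda>h. Jac v *v h)) (at v within S)"
proof (rule vec3_hd)
  fix i :: 3
  have cos_hd: "((\<lambda>v::real^3. cos (v$3)) has_derivative (\<lambda>h. - sin (v$3) * h$3)) (at v within S)"
    by (rule has_derivative_eq_rhs[OF has_derivative_cos[OF vec_nth_hd]]) (simp add: fun_eq_iff)
  have sin_hd: "((\<lambda>v::real^3. sin (v$3)) has_derivative (\<lambda>h. cos (v$3) * h$3)) (at v within S)"
    by (rule has_derivative_eq_rhs[OF has_derivative_sin[OF vec_nth_hd]]) (simp add: fun_eq_iff)
  have c1: "((\<lambda>x. Psi x $ 1) has_derivative (\<lambda>h. (Jac v *v h) $ 1)) (at v within S)"
    unfolding Psi_def vector_3 Jac_mult
    by (rule has_derivative_eq_rhs[OF has_derivative_diff[OF has_derivative_mult[OF cos_hd XX_hd2] has_derivative_mult[OF sin_hd YY_hd2]]])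
       (simp add: fun_eq_iff algebra_simps)
  have c2: "((\<lambda>x. Psi x $ 2) has_derivative (\<lambda>h. (Jac v *v h) $ 2)) (at v within S)"
    unfolding Psi_def vector_3 Jac_mult
    by (rule has_derivative_eq_rhs[OF has_derivative_add[OF has_derivative_mult[OF sin_hd XX_hd2] has_derivative_mult[OF cos_hd YY_hd2]]])
       (simp add: fun_eq_iff algebra_simps)
  have c3: "((\<lambda>x. Psi x $ 3) has_derivative (\<lambda>h. (Jac v *v h) $ 3)) (at v within S)"
    unfolding Psi_def vector_3 Jac_mult by (rule vec_nth_hd)
  show "((\<lambda>x. Psi x $ i) has_derivative (\<lambda>h. (Jac v *v h) $ i)) (at v within S)"
    using exhaust_3[of i] c1 c2 c3 by auto
qed

lemma det_Jac: "det (Jac v) = - (cH (UU (v$1) (v$2)))\<^sup>2"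
proof -
  define a t where "a = v$1" and "t = v$2"
  define c s where "c = cos (v$3)" and "s = sin (v$3)"
  have cs: "c\<^sup>2 + s\<^sup>2 = 1" by (simp add: c_def s_def)
  have "det (Jac v) = (c * Xa a t - s * Ya a t) * (s * Xt a t + c * Yt a t) - (c * Xt a t - s * Yt a t) * (s * Xa a t + c * Ya a t)"
    unfolding det_3 Jac_def Let_def vector_3 a_def t_def c_def s_def by simp
  also have "\<dots> = (c\<^sup>2 + s\<^sup>2) * (Xa a t * Yt a t - Xt a t * Ya a t)"
    by (simp add: algebra_simps power2_eq_square)
  also have "\<dots> = Xa a t * Yt a t - Xt a t * Ya a t" using cs by simp
  also have "\<dots> = sa t * Tp t * (Xs a t * YT a t - XT a t * Ys a t)"
    by (simp add: Xa_def Yt_def Xt_def Ya_def algebra_simps)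
  also have "\<dots> = - (cH (UU a t))\<^sup>2"
  proof -
    define T where "T = TT t"
    define q where "q = ss a t"
    have p: "1 + q\<^sup>2 > 0" by (simp add: add_pos_nonneg)
    define D where "D = 1 + q\<^sup>2"
    have D0: "D \<noteq> 0" using p D_def by simp
    have e1: "Xs a t * YT a t - XT a t * Ys a t = - (1 - T) / D\<^sup>2"
    proof -
      have "Xs a t * YT a t - XT a t * Ys a t = (2 * q * (1 - T) / D\<^sup>2) * (- q / D) - (1 / D) * ((1 - T) * (1 - q\<^sup>2) / D\<^sup>2)"
        by (simp add: Xs_def YT_def XT_def Ys_def T_def q_def D_def)
      also have "\<dots> = - (1 - T) * (2 * q\<^sup>2 + 1 - q\<^sup>2) / (D * D\<^sup>2)"
        using D0 by (simp add: field_simps power2_eq_square)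
      also have "\<dots> = - (1 - T) / D\<^sup>2"
      proof -
        have "2 * q\<^sup>2 + 1 - q\<^sup>2 = D" by (simp add: D_def)
        then show ?thesis using D0 by (simp add: power2_eq_square)
      qed
      finally show ?thesis .
    qed
    have e2: "cH (UU a t) = (1 - T\<^sup>2) / (2 * D)" by (simp add: cH_UU T_def q_def D_def)
    show ?thesis unfolding e1 e2 sa_def Tp_def T_def[symmetric]
      using D0 by (simp add: power2_eq_square field_simps)
  qed
  finally show ?thesis by (simp add: a_def t_def)
qed


lemma Psi_complex: "Complex (Psi v $ 1) (Psi v $ 2) = cis (v$3) * UU (v$1) (v$2)"
  by (simp add: Psi_def UU_eq complex_eq_iff cis.ctr)

lemma Psi3: "Psi v $ 3 = v $ 3"
  by (simp add: Psi_def)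

lemma UU_norm_lt1: "cmod (UU a t) < 1"
proof -
  have "cH (UU a t) > 0" by (rule cH_pos_UU)
  then have "(cmod (UU a t))\<^sup>2 < 1" by (simp add: cH_def)
  then show ?thesis by (simp add: abs_square_less_1)
qed

lemma UU_inj:
  assumes "UU a t = UU a' t'"
  shows "a = a' \<and> t = t'"
proof -
  have key: "ss a t = YY a t / (1 - XX a t) \<and> TT t = 1 - (1 - XX a t) * (1 + (ss a t)\<^sup>2)" for a t
  proof -
    define T s where "T = TT t" and "s = ss a t"
    have p: "1 + s\<^sup>2 > 0" by (simp add: add_pos_nonneg)
    have T1: "1 - T > 0" using TT_bounds[of t] by (simp add: T_def)
    have X: "1 - XX a t = (1 - T) / (1 + s\<^sup>2)" using p by (simp add: XX_def T_def s_def field_simps)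
    have Y: "YY a t = s * ((1 - T) / (1 + s\<^sup>2))" by (simp add: YY_def T_def s_def)
    have nz: "(1 - T) / (1 + s\<^sup>2) \<noteq> 0" using p T1 by simp
    have "s = YY a t / (1 - XX a t)" unfolding X Y using nz by simp
    moreover have "TT t = 1 - (1 - XX a t) * (1 + (ss a t)\<^sup>2)" unfolding X using p by (simp add: T_def s_def)
    ultimately show ?thesis by (simp add: s_def)
  qed
  have XY: "XX a t = XX a' t'" "YY a t = YY a' t'" using assms by (simp_all add: UU_eq)
  have s: "ss a t = ss a' t'" using key[of a t] key[of a' t'] XY by simp
  have T: "TT t = TT t'" using key[of a t] key[of a' t'] XY s by simp
  then have tt: "t = t'" by (simp add: TT_def)
  have "TT t + 1 > 0" using TT_bounds[of t] by simp
  then have "a = a'" using s tt by (simp add: ss_def)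
  then show ?thesis using tt by simp
qed

definition "Sdom = {v::real^3. 0 \<le> v$3 \<and> v$3 < 2 * pi}"
definition "Pimg = {w::real^3. Complex (w$1) (w$2) \<in> ball 0 1 \<and> 0 \<le> w$3 \<and> w$3 < 2 * pi}"

lemma Psi_inj: "inj_on Psi Sdom"
proof (rule inj_onI)
  fix v w assume "Psi v = Psi w"
  then have th: "v$3 = w$3" and c: "cis (v$3) * UU (v$1) (v$2) = cis (w$3) * UU (w$1) (w$2)"
    using Psi3[of v] Psi3[of w] Psi_complex[of v] Psi_complex[of w] by metis+
  have "UU (v$1) (v$2) = UU (w$1) (w$2)" using c th by (simp add: cis_neq_zero)
  then have "v$1 = w$1" "v$2 = w$2" using UU_inj by blast+
  then show "v = w" using th by (simp add: vec_eq_iff forall_3)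
qed

lemma UU_surj:
  assumes "cmod u < 1"
  shows "\<exists>a t. UU a t = u"
proof -
  define X Y where "X = Re u" and "Y = Im u"
  have n: "X\<^sup>2 + Y\<^sup>2 < 1" using assms by (simp add: X_def Y_def cmod_def real_sqrt_lt_1_iff)
  have X1: "X < 1"
  proof -
    have "X\<^sup>2 < 1" using n by (smt (verit) zero_le_power2)
    then show ?thesis by (simp add: abs_square_less_1)
  qed
  define s where "s = Y / (1 - X)"
  define T where "T = 1 - (1 - X) * (1 + s\<^sup>2)"
  have p: "1 + s\<^sup>2 > 0" by (simp add: add_pos_nonneg)
  have T1: "T < 1" using X1 p by (simp add: T_def)
  have T2: "T > -1"
  proof -
    have g: "\<And>D Y::real. D \<noteq> 0 \<Longrightarrow> D * (1 + (Y / D)\<^sup>2) = (D\<^sup>2 + Y\<^sup>2) / D"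
      by (simp add: field_simps power2_eq_square)
    have "(1 - X) * (1 + s\<^sup>2) = ((1 - X)\<^sup>2 + Y\<^sup>2) / (1 - X)"
      unfolding s_def using X1 by (intro g) simp
    also have "\<dots> < 2"
    proof -
      have "(1 - X)\<^sup>2 + Y\<^sup>2 < 2 * (1 - X)" using n by (simp add: power2_eq_square algebra_simps)
      then show ?thesis using X1 by (simp add: divide_less_eq)
    qed
    finally show ?thesis by (simp add: T_def)
  qed
  define t where "t = 2 * artanh T"
  define a where "a = 2 * s / (T + 1)"
  have tt: "TT t = T" using T1 T2 by (simp add: TT_def t_def tanh_artanh_real)
  have sa: "ss a t = s" using T2 by (simp add: ss_def tt a_def)
  have XX: "XX a t = X" using p by (simp add: XX_def tt sa T_def field_simps)
  have YY: "YY a t = Y"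
  proof -
    have "YY a t = s * ((1 - X) * (1 + s\<^sup>2)) / (1 + s\<^sup>2)" by (simp add: YY_def tt sa T_def)
    also have "\<dots> = s * (1 - X)" using p by simp
    also have "\<dots> = Y" using X1 by (simp add: s_def)
    finally show ?thesis .
  qed
  show ?thesis using XX YY by (intro exI[of _ a] exI[of _ t]) (simp add: UU_eq X_def Y_def complex_eq_iff)
qed

lemma Psi_image: "Psi ` Sdom = Pimg"
proof
  show "Psi ` Sdom \<subseteq> Pimg"
  proof
    fix w assume "w \<in> Psi ` Sdom"
    then obtain v where v: "v \<in> Sdom" "w = Psi v" by blast
    have "cmod (Complex (w$1) (w$2)) < 1"
      unfolding v(2) Psi_complex by (simp add: norm_mult UU_norm_lt1)
    then show "w \<in> Pimg" using v Psi3[of v] by (simp add: Pimg_def Sdom_def)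
  qed
  show "Pimg \<subseteq> Psi ` Sdom"
  proof
    fix w assume w: "w \<in> Pimg"
    define u where "u = cis (- (w$3)) * Complex (w$1) (w$2)"
    have "cmod u < 1" using w by (simp add: u_def norm_mult Pimg_def)
    then obtain a t where at: "UU a t = u" using UU_surj by blast
    define v :: "real^3" where "v = vector [a, t, w$3]"
    have "Complex (Psi v $ 1) (Psi v $ 2) = Complex (w$1) (w$2)"
      unfolding Psi_complex by (simp add: v_def at u_def cis_mult)
    then have "Psi v = w" using Psi3[of v] by (simp add: vec_eq_iff forall_3 v_def complex_eq_iff)
    moreover have "v \<in> Sdom" using w by (simp add: v_def Sdom_def Pimg_def)
    ultimately show "w \<in> Psi ` Sdom" by blast
  qed
qed


lemma Sdom_borel: "Sdom \<in> sets borel"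
  unfolding Sdom_def by measurable

lemma Pimg_borel: "Pimg \<in> sets borel"
proof -
  have c: "continuous_on UNIV (\<lambda>w::real^3. Complex (w$1) (w$2))"
    by (intro continuous_intros)
  have o: "open ((\<lambda>w::real^3. Complex (w$1) (w$2)) -` ball 0 1)"
    by (rule open_vimage[OF open_ball c])
  have "Pimg = ((\<lambda>w::real^3. Complex (w$1) (w$2)) -` ball 0 1) \<inter> Sdom"
    by (auto simp: Pimg_def Sdom_def)
  then show ?thesis using sets.Int[OF borel_open[OF o] Sdom_borel] by simp
qed

lemma cov:
  fixes F :: "complex \<times> real \<Rightarrow> real"
  shows "((\<lambda>v. F (cis (v$3) * UU (v$1) (v$2), v$3)) absolutely_integrable_on Sdom \<and>
          integral Sdom (\<lambda>v. F (cis (v$3) * UU (v$1) (v$2), v$3)) = b) \<longleftrightarrow>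
         ((\<lambda>w. F (Complex (w$1) (w$2), w$3) / (cH (Complex (w$1) (w$2)))\<^sup>2) absolutely_integrable_on Pimg \<and>
          integral Pimg (\<lambda>w. F (Complex (w$1) (w$2), w$3) / (cH (Complex (w$1) (w$2)))\<^sup>2) = b)"
proof -
  let ?R = "\<lambda>w. F (Complex (w$1) (w$2), w$3) / (cH (Complex (w$1) (w$2)))\<^sup>2"
  let ?G = "\<lambda>v. F (cis (v$3) * UU (v$1) (v$2), v$3)"
  have S: "Sdom \<in> sets lebesgue" using Sdom_borel by simp
  have main: "(\<lambda>x. \<bar>det (matrix (\<lambda>h. Jac x *v h))\<bar> *\<^sub>R vec (?R (Psi x)) :: real^1) absolutely_integrable_on Sdom \<and>
           integral Sdom (\<lambda>x. \<bar>det (matrix (\<lambda>h. Jac x *v h))\<bar> *\<^sub>R vec (?R (Psi x)) :: real^1) = vec b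
     \<longleftrightarrow> (\<lambda>w. vec (?R w) :: real^1) absolutely_integrable_on (Psi ` Sdom) \<and> integral (Psi ` Sdom) (\<lambda>w. vec (?R w) :: real^1) = vec b"
    by (rule has_absolute_integral_change_of_variables[OF S Psi_hd Psi_inj])
  have eq: "\<bar>det (matrix (\<lambda>h. Jac x *v h))\<bar> *\<^sub>R vec (?R (Psi x)) = (vec (?G x) :: real^1)" for x
  proof -
    have p: "cH (UU (x$1) (x$2)) > 0" by (rule cH_pos_UU)
    have "\<bar>det (matrix (\<lambda>h. Jac x *v h))\<bar> = (cH (UU (x$1) (x$2)))\<^sup>2"
      by (simp add: det_Jac)
    moreover have "?R (Psi x) = ?G x / (cH (UU (x$1) (x$2)))\<^sup>2"
      by (simp add: Psi_complex Psi3 cH_cis_mult)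
    ultimately show ?thesis using p by (simp add: vec_eq_iff)
  qed
  have "?G absolutely_integrable_on Sdom \<and> integral Sdom ?G = b \<longleftrightarrow>
        (\<lambda>x. vec (?G x) :: real^1) absolutely_integrable_on Sdom \<and> integral Sdom (\<lambda>x. vec (?G x) :: real^1) = vec b"
    by (simp add: absolutely_integrable_on_1_iff integral_on_1_eq vec_eq_iff)
  also have "\<dots> \<longleftrightarrow> (\<lambda>w. vec (?R w) :: real^1) absolutely_integrable_on Pimg \<and> integral Pimg (\<lambda>w. vec (?R w) :: real^1) = vec b"
    using main unfolding eq Psi_image .
  also have "\<dots> \<longleftrightarrow> ?R absolutely_integrable_on Pimg \<and> integral Pimg ?R = b"
    by (simp add: absolutely_integrable_on_1_iff integral_on_1_eq vec_eq_iff)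
  finally show ?thesis .
qed


lemma Basis_3: "(Basis :: (real^3) set) = {axis 1 1, axis 2 1, axis 3 1}"
  by (auto simp: Basis_vec_def UNIV_3)

lemma prod_Basis_3: "(\<Prod>b\<in>(Basis::(real^3) set). g b) = g (axis 1 1) * g (axis 2 1) * g (axis 3 1)"
proof -
  have d: "axis (1::3) (1::real) \<noteq> axis 2 1" "axis (1::3) (1::real) \<noteq> axis 3 1" "axis (2::3) (1::real) \<noteq> axis 3 1"
    by (simp_all add: axis_eq_axis)
  show ?thesis unfolding Basis_3 using d by (simp add: mult.assoc)
qed

definition m2 :: "real^3 \<Rightarrow> complex \<times> real" where "m2 v = (Complex (v$1) (v$2), v$3)"
definition m3 :: "real^3 \<Rightarrow> real \<times> (real \<times> real)" where "m3 v = (v$1, (v$2, v$3))"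

lemma m2_meas[measurable]: "m2 \<in> borel_measurable borel"
proof -
  have "continuous_on UNIV m2" unfolding m2_def by (intro continuous_intros)
  then show ?thesis by (rule borel_measurable_continuous_onI)
qed

lemma m3_meas[measurable]: "m3 \<in> borel_measurable borel"
proof -
  have "continuous_on UNIV m3" unfolding m3_def by (intro continuous_intros)
  then show ?thesis by (rule borel_measurable_continuous_onI)
qed

lemma Basis_cr: "(Basis :: (complex \<times> real) set) = {(1, 0), (\<i>, 0), (0, 1)}"
  by (auto simp: Basis_prod_def Basis_complex_def)

lemma Basis_rrr: "(Basis :: (real \<times> (real \<times> real)) set) = {(1, 0, 0), (0, 1, 0), (0, 0, 1)}"
  by (simp add: Basis_prod_def zero_prod_def insert_commute)

lemma m2_preserving: "distr lborel borel m2 = lborel"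
proof (rule lborel_eqI[symmetric])
  show "sets (distr lborel borel m2) = sets borel" by simp
  fix l u :: "complex \<times> real"
  assume lu: "\<And>b. b \<in> Basis \<Longrightarrow> l \<bullet> b \<le> u \<bullet> b"
  define l' u' :: "real^3" where "l' = vector [Re (fst l), Im (fst l), snd l]" and "u' = vector [Re (fst u), Im (fst u), snd u]"
  have pre: "m2 -` box l u = box l' u'"
    by (auto simp: box_def Basis_cr Basis_3 m2_def l'_def u'_def inner_axis cart_eq_inner_axis[symmetric] inner_prod_def
        split: prod.splits)
  have l1: "Re (fst l) \<le> Re (fst u)" using lu[of "(1,0)"] by (simp add: Basis_cr inner_prod_def)
  have l2: "Im (fst l) \<le> Im (fst u)" using lu[of "(\<i>,0)"] by (simp add: Basis_cr inner_prod_def)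
  have l3: "snd l \<le> snd u" using lu[of "(0,1)"] by (simp add: Basis_cr inner_prod_def)
  have lu': "\<And>b. b \<in> Basis \<Longrightarrow> l' \<bullet> b \<le> u' \<bullet> b"
    using l1 l2 l3 by (auto simp: Basis_3 l'_def u'_def inner_axis)
  have "emeasure (distr lborel borel m2) (box l u) = emeasure lborel (m2 -` box l u)"
    by (subst emeasure_distr) auto
  also have "\<dots> = (\<Prod>b\<in>Basis. (u' - l') \<bullet> b)" unfolding pre using lu' by simp
  also have "\<dots> = (\<Prod>b\<in>Basis. (u - l) \<bullet> b)"
    unfolding prod_Basis_3 Basis_cr by (simp add: l'_def u'_def inner_axis inner_prod_def mult.assoc split: prod.splits)
  finally show "emeasure (distr lborel borel m2) (box l u) = (\<Prod>b\<in>Basis. (u - l) \<bullet> b)" .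
qed

lemma m3_preserving: "distr lborel borel m3 = lborel"
proof (rule lborel_eqI[symmetric])
  show "sets (distr lborel borel m3) = sets borel" by simp
  fix l u :: "real \<times> (real \<times> real)"
  assume lu: "\<And>b. b \<in> Basis \<Longrightarrow> l \<bullet> b \<le> u \<bullet> b"
  define l' u' :: "real^3" where "l' = vector [fst l, fst (snd l), snd (snd l)]" and "u' = vector [fst u, fst (snd u), snd (snd u)]"
  have pre: "m3 -` box l u = box l' u'"
    by (auto simp: box_def Basis_rrr Basis_3 m3_def l'_def u'_def inner_axis cart_eq_inner_axis[symmetric] inner_prod_def
        split: prod.splits)
  have l1: "fst l \<le> fst u" using lu[of "(1,0,0)"] by (simp add: Basis_rrr inner_prod_def)
  have l2: "fst (snd l) \<le> fst (snd u)" using lu[of "(0,1,0)"] by (simp add: Basis_rrr inner_prod_def)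
  have l3: "snd (snd l) \<le> snd (snd u)" using lu[of "(0,0,1)"] by (simp add: Basis_rrr inner_prod_def)
  have lu': "\<And>b. b \<in> Basis \<Longrightarrow> l' \<bullet> b \<le> u' \<bullet> b"
    using l1 l2 l3 by (auto simp: Basis_3 l'_def u'_def inner_axis)
  have "emeasure (distr lborel borel m3) (box l u) = emeasure lborel (m3 -` box l u)"
    by (subst emeasure_distr) auto
  also have "\<dots> = (\<Prod>b\<in>Basis. (u' - l') \<bullet> b)" unfolding pre using lu' by simp
  also have "\<dots> = (\<Prod>b\<in>Basis. (u - l) \<bullet> b)"
    unfolding prod_Basis_3 Basis_rrr by (simp add: l'_def u'_def inner_axis inner_prod_def mult.assoc split: prod.splits)
  finally show "emeasure (distr lborel borel m3) (box l u) = (\<Prod>b\<in>Basis. (u - l) \<bullet> b)" .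
qed


lemma translate_set_integral:
  fixes g :: "real \<Rightarrow> real"
  assumes [measurable]: "g \<in> borel_measurable borel"
  shows "(LINT x:{a..<b}|lborel. g (x + c)) = (LINT x:{a+c..<b+c}|lborel. g x)"
proof -
  have "(LINT x:{a+c..<b+c}|lborel. g x) = integral\<^sup>L (distr lborel borel ((+) c)) (\<lambda>x. indicator {a+c..<b+c} x *\<^sub>R g x)"
    by (simp add: lborel_distr_plus set_lebesgue_integral_def)
  also have "\<dots> = integral\<^sup>L lborel (\<lambda>x. indicator {a+c..<b+c} (c + x) *\<^sub>R g (c + x))"
    by (rule integral_distr) auto
  also have "\<dots> = (LINT x:{a..<b}|lborel. g (x + c))"
    unfolding set_lebesgue_integral_def
    by (intro Bochner_Integration.integral_cong refl) (auto simp: indicator_def add.commute)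
  finally show ?thesis ..
qed

lemma cont_set_integrable:
  fixes g :: "real \<Rightarrow> real"
  assumes "continuous_on UNIV g"
  shows "set_integrable lborel {a..<b} g"
proof -
  have "set_integrable lborel {a..b} g"
    unfolding set_integrable_def
    using borel_integrable_compact[of "{a..b}" g] assms by (auto intro: continuous_on_subset)
  then show ?thesis by (rule set_integrable_subset) auto
qed

lemma shift_periodic:
  fixes g :: "real \<Rightarrow> real"
  assumes c: "continuous_on UNIV g" and per: "\<And>x. g (x + 2 * pi) = g x"
  shows "(LINT x:{0..<2*pi}|lborel. g (x + c)) = (LINT x:{0..<2*pi}|lborel. g x)"
proof -
  have [measurable]: "g \<in> borel_measurable borel" using c by (rule borel_measurable_continuous_onI)
  have perk: "g (x + real_of_int k * (2 * pi)) = g x" for x k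
    using periodic_int[of "\<lambda>p. g (snd p)" "()" x k] per by simp
  define k where "k = \<lfloor>c / (2*pi)\<rfloor>"
  define c' where "c' = c - of_int k * (2*pi)"
  have pp: "2 * pi > 0" by simp
  have c'0: "0 \<le> c'" and c'1: "c' < 2 * pi"
  proof -
    have fc: "of_int k \<le> c / (2*pi)" "c / (2*pi) < of_int k + 1"
      using floor_correct[of "c / (2*pi)"] unfolding k_def by auto
    show "0 \<le> c'" using fc(1) pp by (simp add: c'_def pos_le_divide_eq)
    show "c' < 2 * pi" using fc(2) pp by (simp add: c'_def pos_divide_less_eq algebra_simps)
  qed
  have "(LINT x:{0..<2*pi}|lborel. g (x + c)) = (LINT x:{0..<2*pi}|lborel. g (x + c'))"
  proof (rule set_lebesgue_integral_cong)
    show "\<forall>x. x \<in> {0..<2*pi} \<longrightarrow> g (x + c) = g (x + c')"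
      using perk c'_def by (metis add.assoc diff_add_cancel)
  qed auto
  also have "\<dots> = (LINT x:{c'..<2*pi+c'}|lborel. g x)"
    by (rule translate_set_integral[of g 0 "2*pi" c', simplified])
  also have "\<dots> = (LINT x:{c'..<2*pi}|lborel. g x) + (LINT x:{2*pi..<2*pi+c'}|lborel. g x)"
  proof -
    have "{c'..<2*pi+c'} = {c'..<2*pi} \<union> {2*pi..<2*pi+c'}" using c'0 c'1 by auto
    then show ?thesis
      by (simp add: set_integral_Un cont_set_integrable[OF c])
  qed
  also have "(LINT x:{2*pi..<2*pi+c'}|lborel. g x) = (LINT x:{0..<c'}|lborel. g x)"
  proof -
    have "(LINT x:{0..<c'}|lborel. g (x + 2*pi)) = (LINT x:{2*pi..<2*pi+c'}|lborel. g x)"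
      using translate_set_integral[of g 0 c' "2*pi"] by (simp add: add.commute)
    then show ?thesis by (simp add: per)
  qed
  also have "(LINT x:{c'..<2*pi}|lborel. g x) + (LINT x:{0..<c'}|lborel. g x) = (LINT x:{0..<2*pi}|lborel. g x)"
  proof -
    have "{0..<2*pi} = {0..<c'} \<union> {c'..<2*pi}" using c'0 c'1 by auto
    then show ?thesis
      by (simp add: set_integral_Un cont_set_integrable[OF c])
  qed
  finally show ?thesis .
qed


lemma cosh_real_nz: "cosh (x::real) \<noteq> 0"
  by (metis cosh_real_pos less_irrefl)

lemma cont_TT: "continuous_on S C \<Longrightarrow> continuous_on S (\<lambda>x. TT (C x))"
  unfolding TT_def by (intro continuous_intros) (auto simp: cosh_real_nz)

lemma cont_ss: "continuous_on S B \<Longrightarrow> continuous_on S C \<Longrightarrow> continuous_on S (\<lambda>x. ss (B x) (C x))"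
  unfolding ss_def by (intro continuous_intros cont_TT) auto

lemma cont_UU: "continuous_on S B \<Longrightarrow> continuous_on S C \<Longrightarrow> continuous_on S (\<lambda>x. UU (B x) (C x))"
  unfolding UU_def by (intro continuous_intros cont_TT cont_ss) (auto simp: one_plus_is_nz)

lemma cont_ph: "continuous_on S B \<Longrightarrow> continuous_on S C \<Longrightarrow> continuous_on S (\<lambda>x. ph (B x) (C x))"
  unfolding ph_def by (intro continuous_intros cont_ss)

lemma contF:
  fixes f :: "complex \<times> real \<Rightarrow> real"
  assumes "continuous_on UNIV f" "continuous_on UNIV A" "continuous_on UNIV B" "continuous_on UNIV C"
  shows "continuous_on UNIV (\<lambda>x. f (cis (A x) * UU (B x) (C x), A x))"
proof -
  have "continuous_on UNIV (\<lambda>x. (cis (A x) * UU (B x) (C x), A x))"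
    by (intro continuous_intros cont_UU assms)
  then show ?thesis by (rule continuous_on_compose2[OF assms(1)]) auto
qed

lemma measF:
  fixes f :: "complex \<times> real \<Rightarrow> real"
  assumes "continuous_on UNIV f" "continuous_on UNIV A" "continuous_on UNIV B" "continuous_on UNIV C"
  shows "(\<lambda>x. f (cis (A x) * UU (B x) (C x), A x)) \<in> borel_measurable borel"
  by (rule borel_measurable_continuous_onI[OF contF[OF assms]])


lemma meas_ind_fst[measurable]:
  "A \<in> sets borel \<Longrightarrow> (\<lambda>p::'a::euclidean_space \<times> 'b::euclidean_space. indicator A (fst p) :: real) \<in> borel_measurable borel"
  by (rule measurable_compose[OF borel_measurable_continuous_onI[OF continuous_on_fst[OF continuous_on_id]] borel_measurable_indicator])

lemma meas_ind_snd[measurable]: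
  "A \<in> sets borel \<Longrightarrow> (\<lambda>p::'a::euclidean_space \<times> 'b::euclidean_space. indicator A (snd p) :: real) \<in> borel_measurable borel"
  by (rule measurable_compose[OF borel_measurable_continuous_onI[OF continuous_on_snd[OF continuous_on_id]] borel_measurable_indicator])

lemma meas_ind_snd2[measurable]:
  "A \<in> sets borel \<Longrightarrow> (\<lambda>p::'a::euclidean_space \<times> ('b::euclidean_space \<times> 'c::euclidean_space). indicator A (snd (snd p)) :: real) \<in> borel_measurable borel"
  by (rule measurable_compose[OF borel_measurable_continuous_onI[OF continuous_on_snd[OF continuous_on_snd[OF continuous_on_id]]] borel_measurable_indicator])

theorem proposition3p10:
  fixes f :: "complex \<times> real \<Rightarrow> real"
  assumes "Cc_inf_SD f"
  shows "(LINT a|lborel. set_lebesgue_integral lborel {0..<2*pi} (\<lambda>\<beta>. LINT t|lborel.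
            f (gammaH \<beta> a t, thetaH \<beta> a t)))
         = set_lebesgue_integral (lborel \<Otimes>\<^sub>M lborel) (ball 0 1 \<times> {0..<2*pi})
            (\<lambda>p. f p / (cH (fst p))\<^sup>2)"
proof -
  note P = Cc_props[OF assms]
  have cont: "continuous_on UNIV f" by (rule P(1))
  have per: "\<And>z \<theta>. f (z, \<theta> + 2 * pi) = f (z, \<theta>)" by (rule P(2))
  obtain r0 where r0: "0 \<le> r0" "r0 < 1" "\<And>z \<theta>. cmod z > r0 \<Longrightarrow> f (z, \<theta>) = 0" using P(3) by blast
  obtain M where M: "\<And>p. \<bar>f p\<bar> \<le> M" using P(4) by blast
  have M0: "0 \<le> M" using M[of "(0,0)"] by linarith
  have fm[measurable]: "f \<in> borel_measurable borel" using cont by (rule borel_measurable_continuous_onI)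
  define tb where "tb = 2 * artanh r0"
  define ab where "ab = 2 / ((1 - r0\<^sup>2) * (1 - r0))"
  have supp: "\<bar>t\<bar> \<le> tb \<and> \<bar>a\<bar> \<le> ab" if nz: "f (cis x * UU a t, y) \<noteq> 0" for x y a t
  proof -
    have "cmod (UU a t) \<le> r0"
    proof (rule ccontr)
      assume "\<not> cmod (UU a t) \<le> r0"
      then have "cmod (cis x * UU a t) > r0" by (simp add: norm_mult)
      then show False using r0(3) nz by blast
    qed
    then show ?thesis using UU_bound[OF r0(1,2)] by (simp add: tb_def ab_def)
  qed
  define Fe where "Fe a \<beta> t = f (cis (\<beta> + ph a t) * UU a t, \<beta> + ph a t)" for a \<beta> t
  define Phi where "Phi a t \<theta> = f (cis \<theta> * UU a t, \<theta>)" for a t \<theta>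
  define A where "A = {0..<2*pi}"

  have s1: "(LINT t|lborel. f (gammaH \<beta> a t, thetaH \<beta> a t)) = (LINT t|lborel. Fe a \<beta> t)" for a \<beta>
    by (intro Bochner_Integration.integral_cong refl) (simp add: Fe_def integrand_eq[OF per])

  have s2: "(LINT \<beta>:A|lborel. (LINT t|lborel. Fe a \<beta> t)) = (LINT t|lborel. (LINT \<beta>:A|lborel. Fe a \<beta> t))" for a
  proof -
    have int: "integrable (lborel \<Otimes>\<^sub>M lborel) (case_prod (\<lambda>\<beta> t. indicator A \<beta> * Fe a \<beta> t))"
    proof -
      have "integrable lborel (\<lambda>p::real\<times>real. indicator A (fst p) * Fe a (fst p) (snd p))"
      proof (rule integrable_bounded_support[where M=M and B="{0..2*pi} \<times> {-tb..tb}"])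
        have [measurable]: "(\<lambda>p::real\<times>real. Fe a (fst p) (snd p)) \<in> borel_measurable borel"
          unfolding Fe_def by (rule measF[OF cont]) (intro continuous_intros cont_ph)+
        show "(\<lambda>p::real\<times>real. indicator A (fst p) * Fe a (fst p) (snd p)) \<in> borel_measurable borel"
          unfolding A_def by (intro borel_measurable_times meas_ind_fst) simp_all
        show "\<bar>indicator A (fst p) * Fe a (fst p) (snd p)\<bar> \<le> M" for p
          using M[of "(cis (fst p + ph a (snd p)) * UU a (snd p), fst p + ph a (snd p))"] M0
          by (auto simp: indicator_def Fe_def)
        show "bounded ({0..2*pi} \<times> {-tb..tb})" by (intro bounded_Times bounded_closed_interval)
        show "indicator A (fst p) * Fe a (fst p) (snd p) = 0" if "p \<notin> {0..2*pi} \<times> {-tb..tb}" for p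
        proof (rule ccontr)
          assume "indicator A (fst p) * Fe a (fst p) (snd p) \<noteq> 0"
          then have "fst p \<in> A" "Fe a (fst p) (snd p) \<noteq> 0" by (auto simp: indicator_def split: if_splits)
          then show False using that supp[of "fst p + ph a (snd p)" a "snd p" "fst p + ph a (snd p)"]
            by (cases p) (auto simp: A_def Fe_def)
        qed
      qed
      then show ?thesis by (simp add: lborel_prod case_prod_beta')
    qed
    have "(LINT \<beta>:A|lborel. (LINT t|lborel. Fe a \<beta> t)) = (\<integral>\<beta>. (\<integral>t. indicator A \<beta> * Fe a \<beta> t \<partial>lborel) \<partial>lborel)"
      unfolding set_lebesgue_integral_def by simp
    also have "\<dots> = (\<integral>t. (\<integral>\<beta>. indicator A \<beta> * Fe a \<beta> t \<partial>lborel) \<partial>lborel)"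
      using lborel_pair.Fubini_integral[OF int] by simp
    also have "\<dots> = (LINT t|lborel. (LINT \<beta>:A|lborel. Fe a \<beta> t))"
      unfolding set_lebesgue_integral_def by simp
    finally show ?thesis .
  qed

  have s3: "(LINT \<beta>:A|lborel. Fe a \<beta> t) = (LINT \<theta>:A|lborel. Phi a t \<theta>)" for a t
  proof -
    have c: "continuous_on UNIV (\<lambda>\<theta>. Phi a t \<theta>)" unfolding Phi_def
      by (rule contF[OF cont]) (intro continuous_intros)+
    have p: "Phi a t (\<theta> + 2*pi) = Phi a t \<theta>" for \<theta>
    proof -
      have "cis (\<theta> + 2*pi) = cis \<theta>" by (simp add: cis.ctr)
      then show ?thesis unfolding Phi_def using per by simp
    qed
    show ?thesis unfolding A_def Fe_def using shift_periodic[OF c p, of "ph a t"] unfolding Phi_def by simp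
  qed

  define H where "H p = indicator A (snd (snd p)) * Phi (fst p) (fst (snd p)) (snd (snd p))" for p :: "real \<times> (real \<times> real)"
  have Hm[measurable]: "H \<in> borel_measurable borel"
  proof -
    have [measurable]: "(\<lambda>p::real\<times>(real\<times>real). Phi (fst p) (fst (snd p)) (snd (snd p))) \<in> borel_measurable borel"
      unfolding Phi_def by (rule measF[OF cont]) (intro continuous_intros)+
    show ?thesis unfolding H_def A_def by (intro borel_measurable_times meas_ind_snd2) simp_all
  qed
  have Hb: "\<bar>H p\<bar> \<le> M" for p
    using M[of "(cis (snd (snd p)) * UU (fst p) (fst (snd p)), snd (snd p))"] M0
    by (auto simp: indicator_def H_def Phi_def)
  have Hs: "H p = 0" if "p \<notin> {-ab..ab} \<times> ({-tb..tb} \<times> {0..2*pi})" for p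
  proof (rule ccontr)
    assume "H p \<noteq> 0"
    then have "snd (snd p) \<in> A" "Phi (fst p) (fst (snd p)) (snd (snd p)) \<noteq> 0" by (auto simp: H_def indicator_def split: if_splits)
    then show False using that supp[of "snd (snd p)" "fst p" "fst (snd p)" "snd (snd p)"]
      by (cases p) (auto simp: A_def Phi_def)
  qed
  have bH: "bounded ({-ab..ab} \<times> ({-tb..tb} \<times> {0..2*pi}))" by (intro bounded_Times bounded_closed_interval)
  have intH: "integrable lborel H"
    by (rule integrable_bounded_support[OF Hm Hb bH Hs])
  have intHa: "integrable lborel (\<lambda>q::real\<times>real. H (a, q))" for a
  proof (rule integrable_bounded_support[where M=M and B="{-tb..tb} \<times> {0..2*pi}"])
    show "(\<lambda>q::real\<times>real. H (a, q)) \<in> borel_measurable borel" by measurable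
    show "\<bar>H (a, q)\<bar> \<le> M" for q by (rule Hb)
    show "bounded ({-tb..tb} \<times> {0..2*pi})" by (intro bounded_Times bounded_closed_interval)
    show "H (a, q) = 0" if "q \<notin> {-tb..tb} \<times> {0..2*pi}" for q
      using that by (intro Hs) auto
  qed

  have s4: "(LINT t|lborel. (LINT \<theta>:A|lborel. Phi a t \<theta>)) = (\<integral>q. H (a, q) \<partial>lborel)" for a
  proof -
    have i: "integrable (lborel \<Otimes>\<^sub>M lborel) (\<lambda>q::real\<times>real. H (a, q))" using intHa[of a] by (simp add: lborel_prod)
    have "(\<integral>t. (\<integral>\<theta>. H (a, (t, \<theta>)) \<partial>lborel) \<partial>lborel) = (\<integral>q. H (a, q) \<partial>(lborel \<Otimes>\<^sub>M lborel))"
      by (rule lborel_pair.integral_fst'[OF i])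
    then show ?thesis by (simp add: lborel_prod H_def set_lebesgue_integral_def mult.commute)
  qed

  have s5: "(\<integral>a. (\<integral>q. H (a, q) \<partial>lborel) \<partial>lborel) = integral\<^sup>L lborel H"
  proof -
    have i: "integrable (lborel \<Otimes>\<^sub>M lborel) H" using intH by (simp add: lborel_prod)
    have "(\<integral>a. (\<integral>q. H (a, q) \<partial>lborel) \<partial>lborel) = integral\<^sup>L (lborel \<Otimes>\<^sub>M lborel) H"
      by (rule lborel_pair.integral_fst'[OF i])
    then show ?thesis by (simp add: lborel_prod)
  qed

  define G where "G v = f (cis (v$3) * UU (v$1) (v$2), v$3)" for v :: "real^3"
  have Hm3: "H (m3 v) = indicator Sdom v * G v" for v
    by (simp add: H_def m3_def Phi_def G_def A_def Sdom_def indicator_def)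
  have s6: "integral\<^sup>L lborel H = (LINT v:Sdom|lborel. G v)"
  proof -
    have "integral\<^sup>L lborel H = integral\<^sup>L (distr lborel borel m3) H" by (simp add: m3_preserving)
    also have "\<dots> = (\<integral>v. H (m3 v) \<partial>lborel)" by (rule integral_distr) measurable
    finally show ?thesis by (simp add: Hm3 set_lebesgue_integral_def)
  qed
  have intG: "set_integrable lborel Sdom G"
  proof -
    have "integrable (distr lborel borel m3) H" using intH by (simp add: m3_preserving)
    then have "integrable lborel (\<lambda>v. H (m3 v))" by (subst (asm) integrable_distr_eq) measurable
    then show ?thesis unfolding set_integrable_def by (simp add: Hm3)
  qed
  have s7: "(LINT v:Sdom|lborel. G v) = integral Sdom G"
    by (rule set_borel_integral_eq_integral(2)[OF intG])

  define R where "R w = f (Complex (w$1) (w$2), w$3) / (cH (Complex (w$1) (w$2)))\<^sup>2" for w :: "real^3"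
  define Q where "Q p = indicator (ball 0 1) (fst p) * indicator A (snd p) * (f p / (cH (fst p))\<^sup>2)" for p :: "complex \<times> real"
  have cHc: "continuous_on UNIV cH" unfolding cH_def by (intro continuous_intros) auto
  have cHm[measurable]: "cH \<in> borel_measurable borel" by (rule borel_measurable_continuous_onI[OF cHc])
  have Qm[measurable]: "Q \<in> borel_measurable borel" unfolding Q_def A_def
    by (intro borel_measurable_times borel_measurable_divide meas_ind_fst meas_ind_snd fm borel_measurable_power
        measurable_compose[OF borel_measurable_continuous_onI[OF continuous_on_fst[OF continuous_on_id]] cHm]) simp_all
  have Qm2: "Q (m2 w) = indicator Pimg w * R w" for w
    by (simp add: Q_def m2_def R_def Pimg_def A_def indicator_def)
  have cmp[measurable]: "(\<lambda>w::real^3. Complex (w$1) (w$2)) \<in> borel_measurable borel"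
  proof -
    have "continuous_on UNIV (\<lambda>w::real^3. Complex (w$1) (w$2))" by (intro continuous_intros)
    then show ?thesis by (rule borel_measurable_continuous_onI)
  qed
  have Pimg_m[measurable]: "Pimg \<in> sets borel" by (rule Pimg_borel)
  have intR: "set_integrable lborel Pimg R"
    unfolding set_integrable_def
  proof (rule integrable_bounded_support[where M="M / ((1 - r0\<^sup>2) / 2)\<^sup>2" and B="cbox (vector [-1, -1, 0]) (vector [1, 1, 2*pi])"])
    show "(\<lambda>w. indicator Pimg w *\<^sub>R R w) \<in> borel_measurable borel" unfolding R_def by measurable
    show "bounded (cbox (vector [-1, -1, 0]) (vector [1, 1, 2*pi]) :: (real^3) set)" by (rule bounded_cbox)
    show "\<bar>indicator Pimg w *\<^sub>R R w\<bar> \<le> M / ((1 - r0\<^sup>2) / 2)\<^sup>2" for w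
    proof (cases "f (Complex (w$1) (w$2), w$3) = 0")
      case True
      have "0 \<le> M / ((1 - r0\<^sup>2) / 2)\<^sup>2" using M0 by simp
      then show ?thesis using True by (simp add: R_def indicator_def)
    next
      case False
      define z where "z = Complex (w$1) (w$2)"
      have zr: "cmod z \<le> r0" using False r0(3) unfolding z_def by force
      have r02: "r0\<^sup>2 < 1" using r0 by (simp add: abs_square_less_1)
      have c0: "0 < (1 - r0\<^sup>2) / 2" using r02 by simp
      have "(cmod z)\<^sup>2 \<le> r0\<^sup>2" using zr by (simp add: power_mono)
      then have cz: "(1 - r0\<^sup>2) / 2 \<le> cH z" by (simp add: cH_def)
      have "((1 - r0\<^sup>2) / 2)\<^sup>2 \<le> (cH z)\<^sup>2" using cz c0 by (simp add: power_mono)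
      moreover have "\<bar>f (z, w$3)\<bar> \<le> M" by (rule M)
      ultimately have "\<bar>f (z, w$3)\<bar> / (cH z)\<^sup>2 \<le> M / ((1 - r0\<^sup>2) / 2)\<^sup>2"
        using c0 M0 by (intro frac_le) auto
      then show ?thesis using M0 by (simp add: R_def z_def[symmetric] indicator_def abs_divide)
    qed
    show "indicator Pimg w *\<^sub>R R w = 0" if "w \<notin> cbox (vector [-1, -1, 0]) (vector [1, 1, 2*pi])" for w
    proof (cases "w \<in> Pimg")
      case True
      then have "cmod (Complex (w$1) (w$2)) < 1" "0 \<le> w$3" "w$3 < 2*pi" by (auto simp: Pimg_def)
      moreover have "\<bar>w$1\<bar> \<le> cmod (Complex (w$1) (w$2))" "\<bar>w$2\<bar> \<le> cmod (Complex (w$1) (w$2))"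
        using abs_Re_le_cmod[of "Complex (w$1) (w$2)"] abs_Im_le_cmod[of "Complex (w$1) (w$2)"] by simp_all
      ultimately have "w \<in> cbox (vector [-1, -1, 0]) (vector [1, 1, 2*pi])"
        unfolding mem_box_cart(2) forall_3 by auto
      then show ?thesis using that by blast
    qed simp
  qed
  have absR: "R absolutely_integrable_on Pimg"
    using intR unfolding set_integrable_def
    by (subst integrable_completion) (measurable, simp add: R_def)
  have r1: "set_lebesgue_integral (lborel \<Otimes>\<^sub>M lborel) (ball 0 1 \<times> {0..<2*pi}) (\<lambda>p. f p / (cH (fst p))\<^sup>2) = integral\<^sup>L lborel Q"
    unfolding set_lebesgue_integral_def lborel_prod
    by (intro Bochner_Integration.integral_cong refl) (simp add: Q_def A_def indicator_times)
  have r2: "integral\<^sup>L lborel Q = (LINT w:Pimg|lborel. R w)"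
  proof -
    have "integral\<^sup>L lborel Q = integral\<^sup>L (distr lborel borel m2) Q" by (simp add: m2_preserving)
    also have "\<dots> = (\<integral>w. Q (m2 w) \<partial>lborel)" by (rule integral_distr) measurable
    finally show ?thesis by (simp add: Qm2 set_lebesgue_integral_def)
  qed
  have r3: "(LINT w:Pimg|lborel. R w) = integral Pimg R"
    by (rule set_borel_integral_eq_integral(2)[OF intR])
  have cv: "G absolutely_integrable_on Sdom \<and> integral Sdom G = integral Pimg R"
    using cov[of f "integral Pimg R"] absR unfolding G_def R_def by blast

  have "(LINT a|lborel. set_lebesgue_integral lborel {0..<2*pi} (\<lambda>\<beta>. LINT t|lborel. f (gammaH \<beta> a t, thetaH \<beta> a t)))
      = (LINT a|lborel. (LINT \<beta>:A|lborel. (LINT t|lborel. Fe a \<beta> t)))"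
    by (simp add: s1 A_def)
  also have "\<dots> = (LINT a|lborel. (LINT t|lborel. (LINT \<beta>:A|lborel. Fe a \<beta> t)))"
    by (simp add: s2)
  also have "\<dots> = (LINT a|lborel. (LINT t|lborel. (LINT \<theta>:A|lborel. Phi a t \<theta>)))"
    by (simp add: s3)
  also have "\<dots> = (\<integral>a. (\<integral>q. H (a, q) \<partial>lborel) \<partial>lborel)"
    by (simp add: s4)
  also have "\<dots> = integral Sdom G" using s5 s6 s7 by simp
  also have "\<dots> = integral Pimg R" using cv by simp
  also have "\<dots> = set_lebesgue_integral (lborel \<Otimes>\<^sub>M lborel) (ball 0 1 \<times> {0..<2*pi}) (\<lambda>p. f p / (cH (fst p))\<^sup>2)"
    using r1 r2 r3 by simp
  finally show ?thesis .
qed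


end
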